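(* Let $G=(V,v,E)$ be a directed graph with $V=\{1,\dots,n\}$, target node $v$, edge set $E$, and let $Z$ be a set of ordered node pairs with $Z\cap E=\emptyset$. For $\mathbf{y}\in\{0,1\}^{Z}$ with support $Y$, let $\mathcal{FR}(\mathbf{y})\ge0$ be the expected first return time to $v$ of the PageRank random walk on $(V,E\cup Y)$. Let $\mathcal{Y}$ be a constraint set with $\mathcal{Y}\cap\{0,1\}^{Z}\ne\emptyset$, for disjoint $S,N\subseteq Z$ let $\gamma(S,N)=\min\{\mathcal{FR}(\mathbf{y}): y_e=1\ \forall e\in S,\ y_e=0\ \forall e\in N,\ \mathbf{y}\in\{0,1\}^{Z}\}$, and let $m=\min_{\mathbf{y}\in\{0,1\}^{Z}}\mathcal{FR}(\mathbf{y})$. Let $\bar{\mathbf{y}}\in\mathcal{Y}\cap\{0,1\}^{Z}$ with support $\bar Y$, let $e^1,\dots,e^{K}$ be an arbitrary ordering of $Z\setminus\bar Y$, and let $\hat\pi_{e^r}(\bar{\mathbf{y}})=\min\{0,-\mathcal{FR}(\bar{\mathbf{y}})+\gamma(\{e^r\},\{e^{r+1},\dots,e^{K}\})\}$. Define for $\mathbf{y}\in[0,1]^{Z}$ $$B(\mathbf{y})=\mathcal{FR}(\bar{\mathbf{y}})+\sum_{e\in\bar Y}\min\{0,\gamma(\emptyset,\{e\})-\mathcal{FR}(\bar{\mathbf{y}})\}(1-y_e)+\sum_{k=1}^{K}\hat\pi_{e^k}(\bar{\mathbf{y}})y_{e^k},$$ $$L(\mathbf{y})=\mathcal{FR}(\bar{\mathbf{y}})+\sum_{e\in\bar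 Y}(m-\mathcal{FR}(\bar{\mathbf{y}}))(1-y_e)+\sum_{e\in Z\setminus\bar Y}(m-\mathcal{FR}(\bar{\mathbf{y}}))y_e.$$ Then the inequality $\theta\ge B(\mathbf{y})$ is stronger than the $L$-shaped inequality $\theta\ge L(\mathbf{y})$, i.e. $B(\mathbf{y})\ge L(\mathbf{y})$ for all $\mathbf{y}\in[0,1]^{Z}$ (coefficientwise comparison).
   Context: The PageRank random walk is the random walk defined by the PageRank (Google) matrix with fixed damping and teleportation, as in Csáji–Jungers–Blondel; the expected first return time to $v$ is the expected number of steps for the walk started at $v$ to return to $v$. *)

theory Defs
  imports Complex_Main
begin

type_synonym node = nat
type_synonym edge = "nat \<times> nat"

definition outdeg :: "nat \<Rightarrow> edge set \<Rightarrow> nat \<Rightarrow> nat" where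
  "outdeg n Ed i = card {j \<in> {1..n}. (i, j) \<in> Ed}"

definition link_prob :: "nat \<Rightarrow> edge set \<Rightarrow> nat \<Rightarrow> nat \<Rightarrow> real" where
  "link_prob n Ed i j =
     (if outdeg n Ed i = 0 then 1 / real n
      else if (i, j) \<in> Ed then 1 / real (outdeg n Ed i) else 0)"

definition pagerank_prob :: "real \<Rightarrow> (nat \<Rightarrow> real) \<Rightarrow> nat \<Rightarrow> edge set \<Rightarrow> nat \<Rightarrow> nat \<Rightarrow> real" where
  "pagerank_prob alpha z n Ed i j = alpha * link_prob n Ed i j + (1 - alpha) * z j"

text \<open>taboo_prob ... k j: probability that the walk started at v is at j at step k
  without having visited v at any of the steps 1..k-1 (k >= 1).\<close>
fun taboo_prob :: "real \<Rightarrow> (nat \<Rightarrow> real) \<Rightarrow> nat \<Rightarrow> edge set \<Rightarrow> nat \<Rightarrow> nat \<Rightarrow> nat \<Rightarrow> real" where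
  "taboo_prob alpha z n Ed v 0 j = (if j = v then 1 else 0)"
| "taboo_prob alpha z n Ed v (Suc k) j =
     (\<Sum>i\<in>{1..n}. (if k = 0 \<or> i \<noteq> v then taboo_prob alpha z n Ed v k i else 0)
                   * pagerank_prob alpha z n Ed i j)"

definition first_return_time :: "real \<Rightarrow> (nat \<Rightarrow> real) \<Rightarrow> nat \<Rightarrow> edge set \<Rightarrow> nat \<Rightarrow> real" where
  "first_return_time alpha z n Ed v =
     (\<Sum>k. real (Suc k) * taboo_prob alpha z n Ed v (Suc k) v)"

text \<open>FR(y) for the binary vector y with support Y: graph (V, E \<union> Y).\<close>
definition FR :: "real \<Rightarrow> (nat \<Rightarrow> real) \<Rightarrow> nat \<Rightarrow> edge set \<Rightarrow> nat \<Rightarrow> edge set \<Rightarrow> real" where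
  "FR alpha z n E v Y = first_return_time alpha z n (E \<union> Y) v"

text \<open>gamma(S,N) = min of FR over binary y with y_e = 1 on S and y_e = 0 on N
  (binary vectors represented by their supports Y \<subseteq> Z).\<close>
definition gamma :: "real \<Rightarrow> (nat \<Rightarrow> real) \<Rightarrow> nat \<Rightarrow> edge set \<Rightarrow> nat \<Rightarrow> edge set
    \<Rightarrow> edge set \<Rightarrow> edge set \<Rightarrow> real" where
  "gamma alpha z n E v Z S N =
     Min (FR alpha z n E v ` {Y. Y \<subseteq> Z \<and> S \<subseteq> Y \<and> Y \<inter> N = {}})"

end

theory Submission
  imports Defs
begin

theorem corollary2:
  fixes alpha :: real and z :: "nat \<Rightarrow> real" and n :: nat and v :: nat
    and E Z :: "(nat \<times> nat) set"
    and Ycal :: "((nat \<times> nat) \<Rightarrow> real) set"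
    and ybar :: "(nat \<times> nat) \<Rightarrow> real"
    and ord :: "nat \<Rightarrow> nat \<times> nat"
  assumes n_pos: "n \<ge> 1"
    and v_in: "v \<in> {1..n}"
    and alpha: "0 < alpha" "alpha < 1"
    and z_pos: "\<forall>j\<in>{1..n}. z j > 0"
    and z_sum: "(\<Sum>j\<in>{1..n}. z j) = 1"
    and E_sub: "E \<subseteq> {1..n} \<times> {1..n}"
    and Z_sub: "Z \<subseteq> {1..n} \<times> {1..n}"
    and ZE: "Z \<inter> E = {}"
    and ybar_in: "ybar \<in> Ycal"
    and ybar_bin: "\<forall>e\<in>Z. ybar e \<in> {0, 1}"
    and ybar_ext: "\<forall>e. e \<notin> Z \<longrightarrow> ybar e = 0"
    and ord_bij: "bij_betw ord {1..card (Z - {e\<in>Z. ybar e = 1})} (Z - {e\<in>Z. ybar e = 1})"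
  shows
    "let Ybar = {e\<in>Z. ybar e = 1};
         K = card (Z - Ybar);
         FRb = FR alpha z n E v Ybar;
         \<gamma> = gamma alpha z n E v Z;
         m = Min (FR alpha z n E v ` Pow Z);
         \<pi> = (\<lambda>r. min 0 (- FRb + \<gamma> {ord r} (ord ` {r+1..K})));
         B = (\<lambda>y. FRb + (\<Sum>e\<in>Ybar. min 0 (\<gamma> {} {e} - FRb) * (1 - y e))
                       + (\<Sum>k=1..K. \<pi> k * y (ord k)));
         L = (\<lambda>y. FRb + (\<Sum>e\<in>Ybar. (m - FRb) * (1 - y e))
                       + (\<Sum>e\<in>Z - Ybar. (m - FRb) * y e))
     in (\<forall>e\<in>Ybar. min 0 (\<gamma> {} {e} - FRb) \<ge> m - FRb)
      \<and> (\<forall>k\<in>{1..K}. \<pi> k \<ge> m - FRb)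
      \<and> (\<forall>y. (\<forall>e\<in>Z. 0 \<le> y e \<and> y e \<le> 1) \<longrightarrow> B y \<ge> L y)"
proof -
  define Ybar where "Ybar = {e\<in>Z. ybar e = 1}"
  define K where "K = card (Z - Ybar)"
  define FRb where "FRb = FR alpha z n E v Ybar"
  define g where "g = gamma alpha z n E v Z"
  define m where "m = Min (FR alpha z n E v ` Pow Z)"
  have finZ: "finite Z" using Z_sub finite_subset by blast
  have mle: "m \<le> FR alpha z n E v Y" if "Y \<subseteq> Z" for Y
    unfolding m_def using finZ that by (intro Min_le) auto
  have gge: "g S N \<ge> m" if "Y \<subseteq> Z" "S \<subseteq> Y" "Y \<inter> N = {}" for S N Y
  proof -
    have ne: "{Y. Y \<subseteq> Z \<and> S \<subseteq> Y \<and> Y \<inter> N = {}} \<noteq> {}" using that by blast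
    have fin: "finite {Y. Y \<subseteq> Z \<and> S \<subseteq> Y \<and> Y \<inter> N = {}}"
      using finZ by (rule finite_subset[rotated, OF finite_Pow_iff[THEN iffD2]]) auto
    show ?thesis unfolding g_def gamma_def using ne fin mle
      by (subst Min_ge_iff) auto
  qed
  have mFRb: "m \<le> FRb" unfolding FRb_def Ybar_def by (rule mle) auto
  have bij: "bij_betw ord {1..K} (Z - Ybar)" using ord_bij unfolding K_def Ybar_def .
  have P1: "\<forall>e\<in>Ybar. min 0 (g {} {e} - FRb) \<ge> m - FRb"
    using gge[of "{}" "{}"] mFRb by auto
  have P2: "\<forall>k\<in>{1..K}. min 0 (- FRb + g {ord k} (ord ` {k+1..K})) \<ge> m - FRb"
  proof
    fix k assume k: "k \<in> {1..K}"
    have "ord k \<in> Z" using bij k by (auto dest: bij_betwE)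
    moreover have "ord k \<notin> ord ` {k+1..K}"
      using bij k unfolding bij_betw_def inj_on_def by fastforce
    ultimately have "g {ord k} (ord ` {k+1..K}) \<ge> m"
      by (intro gge[of "{ord k}"]) auto
    then show "min 0 (- FRb + g {ord k} (ord ` {k+1..K})) \<ge> m - FRb" using mFRb by auto
  qed
  have P3: "FRb + (\<Sum>e\<in>Ybar. min 0 (g {} {e} - FRb) * (1 - y e))
              + (\<Sum>k=1..K. min 0 (- FRb + g {ord k} (ord ` {k+1..K})) * y (ord k))
          \<ge> FRb + (\<Sum>e\<in>Ybar. (m - FRb) * (1 - y e)) + (\<Sum>e\<in>Z - Ybar. (m - FRb) * y e)"
    if y: "\<forall>e\<in>Z. 0 \<le> y e \<and> y e \<le> 1" for y
  proof -
    have "(\<Sum>e\<in>Ybar. (m - FRb) * (1 - y e)) \<le> (\<Sum>e\<in>Ybar. min 0 (g {} {e} - FRb) * (1 - y e))"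
    proof (rule sum_mono)
      fix e assume "e \<in> Ybar"
      then show "(m - FRb) * (1 - y e) \<le> min 0 (g {} {e} - FRb) * (1 - y e)"
      proof -
        have "m - FRb \<le> min 0 (g {} {e} - FRb)" using P1 \<open>e \<in> Ybar\<close> by blast
        moreover have "0 \<le> 1 - y e" using y \<open>e \<in> Ybar\<close> Ybar_def by auto
        ultimately show ?thesis by (rule mult_right_mono)
      qed
    qed
    moreover have "(\<Sum>e\<in>Z - Ybar. (m - FRb) * y e) = (\<Sum>k=1..K. (m - FRb) * y (ord k))"
      using sum.reindex_bij_betw[OF bij, of "\<lambda>e. (m - FRb) * y e"] by simp
    moreover have "(\<Sum>k=1..K. (m - FRb) * y (ord k)) \<le> (\<Sum>k=1..K. min 0 (- FRb + g {ord k} (ord ` {k+1..K})) * y (ord k))"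
    proof (rule sum_mono)
      fix k assume k: "k \<in> {1..K}"
      then have "ord k \<in> Z" using bij by (auto dest: bij_betwE)
      then show "(m - FRb) * y (ord k) \<le> min 0 (- FRb + g {ord k} (ord ` {k+1..K})) * y (ord k)"
        using P2 k y by (intro mult_right_mono) auto
    qed
    ultimately show ?thesis by linarith
  qed
  show ?thesis
    unfolding Let_def Ybar_def[symmetric] K_def[symmetric] FRb_def[symmetric] g_def[symmetric] m_def[symmetric]
    using P1 P2 P3 by blast
qed

end
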